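(* Consider the $Q\times2$ coin problem below with $Q\ge12$, $C_1=40$, $C_2=64$ and budget $H>0$. If $\epsilon=\frac1{20}\sqrt{\frac{Q\delta}{H}}$, then for any algorithm $\mathrm{Alg}$, if $N_1\le\frac{Q}{4C_1\lambda^2}$, there exists a set $J\subseteq[Q]$ with $|J|\ge\frac Q6$ such that $\mathbb P_j[\hat\theta=j]\le\frac12$ for all $j\in J$.
   Context: Coin problem: constants $\delta,\lambda,\epsilon\in(0,\frac14]$ and $2Q$ coins arranged in a $Q\times2$ table (rows $1,\dots,Q$, columns $1,2$), one coin per cell. There is an unknown special row $\theta\in[Q]$. In column 1 all coins are fair except the coin in row $\theta$, whose probability of heads is $\frac12+\lambda$. In column 2 all coins have probability of heads $\delta$ except the coin in row $\theta$, with probability of heads $\delta+\epsilon$. An algorithm sequentially chooses coins to flip, each choice possibly depending on previous outcomes, performs a (possibly data-dependent) total of $\tau=N_1+N_2\le H$ flips for the fixed budget $H$, where $N_1,N_2$ are the numbers of flips in column 1 and column 2, and then outputs $\hat\theta\in[Q]$. For $j\in[Q]$, $\mathbb P_j$ is the probability measure induced by the algorithm and coins when $\theta=j$. *)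

theory Defs
  imports "HOL-Probability.Probability"
begin

text \<open>Rows are 1..Q, columns are 1 and 2. A history is the list of
  performed flips (row, column, outcome).\<close>

datatype action = Flip nat nat | Output nat

type_synonym history = "(nat \<times> nat \<times> bool) list"
type_synonym algorithm = "history \<Rightarrow> action pmf"

definition coin_prob :: "real \<Rightarrow> real \<Rightarrow> real \<Rightarrow> nat \<Rightarrow> nat \<Rightarrow> nat \<Rightarrow> real" where
  "coin_prob \<delta> lam \<epsilon> th r c =
     (if c = 1 then (if r = th then 1/2 + lam else 1/2)
      else (if r = th then \<delta> + \<epsilon> else \<delta>))"

fun run :: "real \<Rightarrow> real \<Rightarrow> real \<Rightarrow> nat \<Rightarrow> algorithm \<Rightarrow> nat \<Rightarrow> history \<Rightarrow> (history \<times> nat) pmf" where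
  "run \<delta> lam \<epsilon> th alg 0 h =
     map_pmf (\<lambda>a. case a of Output t \<Rightarrow> (h, t) | Flip r c \<Rightarrow> (h, 0)) (alg h)"
| "run \<delta> lam \<epsilon> th alg (Suc k) h =
     alg h \<bind> (\<lambda>a. case a of
        Output t \<Rightarrow> return_pmf (h, t)
      | Flip r c \<Rightarrow> bernoulli_pmf (coin_prob \<delta> lam \<epsilon> th r c) \<bind>
                      (\<lambda>b. run \<delta> lam \<epsilon> th alg k (h @ [(r, c, b)])))"

definition valid_alg :: "nat \<Rightarrow> nat \<Rightarrow> algorithm \<Rightarrow> bool" where
  "valid_alg Q H alg \<longleftrightarrow>
     (\<forall>h a. a \<in> set_pmf (alg h) \<longrightarrow>
        (case a of Flip r c \<Rightarrow> r \<in> {1..Q} \<and> c \<in> {1, 2} \<and> length h < H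
                 | Output t \<Rightarrow> t \<in> {1..Q}))"

definition outcome :: "real \<Rightarrow> real \<Rightarrow> real \<Rightarrow> nat \<Rightarrow> algorithm \<Rightarrow> nat \<Rightarrow> (history \<times> nat) pmf" where
  "outcome \<delta> lam \<epsilon> H alg j = run \<delta> lam \<epsilon> j alg H []"

definition N1 :: "history \<Rightarrow> nat" where
  "N1 h = length (filter (\<lambda>(r, c, b). c = 1) h)"

end

theory Submission
  imports Defs
begin


definition G :: "real \<Rightarrow> real \<Rightarrow> real" where "G a b = a * ln (a / b)"
definition kl :: "real \<Rightarrow> real \<Rightarrow> real" where "kl p q = G p q + G (1 - p) (1 - q)"

lemma ln_ge_one_minus_inv: "0 < (x::real) \<Longrightarrow> 1 - 1 / x \<le> ln x"
proof -
  assume x: "0 < x"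
  have "ln (1/x) \<le> 1/x - 1" using x by (intro ln_le_minus_one) simp
  thus ?thesis using x by (simp add: ln_div)
qed

lemma G_ge: assumes "0 \<le> a" "0 < b" shows "a - b \<le> G a b"
proof (cases "a = 0")
  case True thus ?thesis using assms by (simp add: G_def)
next
  case False
  hence a: "a > 0" using assms by simp
  have "1 - 1/(a/b) \<le> ln (a/b)" using a assms by (intro ln_ge_one_minus_inv) simp
  hence "a * (1 - 1/(a/b)) \<le> a * ln (a/b)" using a by (intro mult_left_mono) auto
  moreover have "a * (1 - 1/(a/b)) = a - b" using a assms by (simp add: field_simps)
  ultimately show ?thesis by (simp add: G_def)
qed

lemma G_le: assumes "0 \<le> a" "0 < b" shows "G a b \<le> a * a / b - a"
proof (cases "a = 0")
  case True thus ?thesis using assms by (simp add: G_def)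
next
  case False
  hence a: "a > 0" using assms by simp
  have "ln (a/b) \<le> a/b - 1" using a assms by (intro ln_le_minus_one) simp
  hence "a * ln (a/b) \<le> a * (a/b - 1)" using a by (intro mult_left_mono) auto
  thus ?thesis by (simp add: G_def field_simps)
qed

lemma G_zero[simp]: "G 0 b = 0" by (simp add: G_def)

lemma kl_self[simp]: "kl p p = 0"
  by (cases "p = 0"; cases "p = 1") (auto simp: kl_def G_def)

lemma kl_nonneg: assumes "0 \<le> p" "p \<le> 1" "0 < q" "q < 1" shows "0 \<le> kl p q"
  using G_ge[of p q] G_ge[of "1-p" "1-q"] assms by (simp add: kl_def)

lemma kl_upper: assumes "0 \<le> p" "p \<le> 1" "0 < q" "q < 1" shows "kl p q \<le> (p - q)^2 / (q * (1 - q))"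
proof -
  have "kl p q \<le> (p*p/q - p) + ((1-p)*(1-p)/(1-q) - (1-p))"
    using G_le[of p q] G_le[of "1-p" "1-q"] assms by (simp add: kl_def)
  also have "\<dots> = (p - q)^2 / (q * (1 - q))" using assms
    by (simp add: field_simps power2_eq_square)
  finally show ?thesis .
qed

lemma G_scale: "G (w * x) (w * y) = w * G x y"
  by (cases "w = 0") (simp_all add: G_def)

lemma G_mult: assumes "0 < p" "0 < q" "0 \<le> x" "x > 0 \<longrightarrow> y > 0"
  shows "G (p * x) (q * y) = x * G p q + p * G x y"
proof (cases "x = 0")
  case True thus ?thesis by (simp add: G_def)
next
  case False
  hence "x > 0" "y > 0" using assms by auto
  hence "ln ((p*x)/(q*y)) = ln (p/q) + ln (x/y)" using assms
    using ln_mult[of "p/q" "x/y"] by (simp add: field_simps)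
  thus ?thesis by (simp add: G_def algebra_simps)
qed

lemma logsum2:
  assumes "0 \<le> a1" "0 \<le> a2" "0 \<le> b1" "0 \<le> b2" "a1 > 0 \<longrightarrow> b1 > 0" "a2 > 0 \<longrightarrow> b2 > 0"
  shows "G (a1 + a2) (b1 + b2) \<le> G a1 b1 + G a2 b2"
proof -
  consider "a1 = 0" | "a2 = 0" | "a1 > 0 \<and> a2 > 0" using assms by linarith
  thus ?thesis
  proof cases
    case 1
    show ?thesis
    proof (cases "a2 = 0")
      case True thus ?thesis using 1 by simp
    next
      case False
      hence "a2 > 0" "b2 > 0" using assms by auto
      hence "ln (a2 / (b1 + b2)) \<le> ln (a2 / b2)" using assms
        by (subst ln_le_cancel_iff) (auto intro!: divide_left_mono)
      thus ?thesis using 1 \<open>a2 > 0\<close> by (simp add: G_def)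
    qed
  next
    case 2
    show ?thesis
    proof (cases "a1 = 0")
      case True thus ?thesis using 2 by simp
    next
      case False
      hence "a1 > 0" "b1 > 0" using assms by auto
      hence "ln (a1 / (b1 + b2)) \<le> ln (a1 / b1)" using assms
        by (subst ln_le_cancel_iff) (auto intro!: divide_left_mono)
      thus ?thesis using 2 \<open>a1 > 0\<close> by (simp add: G_def)
    qed
  next
    case 3
    hence p: "a1 > 0" "a2 > 0" "b1 > 0" "b2 > 0" using assms by auto
    define A where "A = a1 + a2"
    define B where "B = b1 + b2"
    have AB: "A > 0" "B > 0" using p by (auto simp: A_def B_def)
    have e1: "ln (a1/b1) = ln (A/B) + ln ((a1*B)/(b1*A))" using p AB
      using ln_mult[of "A/B" "(a1*B)/(b1*A)"] by (simp add: field_simps)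
    have e2: "ln (a2/b2) = ln (A/B) + ln ((a2*B)/(b2*A))" using p AB
      using ln_mult[of "A/B" "(a2*B)/(b2*A)"] by (simp add: field_simps)
    have i1: "1 - 1/((a1*B)/(b1*A)) \<le> ln ((a1*B)/(b1*A))" using p AB
      by (intro ln_ge_one_minus_inv) simp
    have i2: "1 - 1/((a2*B)/(b2*A)) \<le> ln ((a2*B)/(b2*A))" using p AB
      by (intro ln_ge_one_minus_inv) simp
    have j1: "a1 * (1 - 1/((a1*B)/(b1*A))) \<le> a1 * ln ((a1*B)/(b1*A))"
      using i1 p by (intro mult_left_mono) auto
    have j2: "a2 * (1 - 1/((a2*B)/(b2*A))) \<le> a2 * ln ((a2*B)/(b2*A))"
      using i2 p by (intro mult_left_mono) auto
    have k1: "a1 * (1 - 1/((a1*B)/(b1*A))) = a1 - b1*(A/B)"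
      using p AB by (simp add: field_simps)
    have k2: "a2 * (1 - 1/((a2*B)/(b2*A))) = a2 - b2*(A/B)"
      using p AB by (simp add: field_simps)
    have k3': "a1 - b1*C + (a2 - b2*C) = A - B * C" for C by (simp add: A_def B_def algebra_simps)
    have k3: "a1 - b1*(A/B) + (a2 - b2*(A/B)) = A - B * (A/B)" by (rule k3')
    have k: "a1 * (1 - 1/((a1*B)/(b1*A))) + a2 * (1 - 1/((a2*B)/(b2*A))) = 0"
      using k1 k2 k3 AB by simp
    have "G a1 b1 + G a2 b2 = A * ln (A/B) + (a1 * ln ((a1*B)/(b1*A)) + a2 * ln ((a2*B)/(b2*A)))"
      unfolding G_def e1 e2 by (simp add: A_def algebra_simps)
    moreover have "G (a1 + a2) (b1 + b2) = A * ln (A/B)" by (simp add: G_def A_def B_def)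
    ultimately show ?thesis using j1 j2 k by linarith
  qed
qed




lemma sum_pos_ex:
  fixes a b :: "'i \<Rightarrow> real"
  assumes "finite S" "\<forall>i\<in>S. 0 \<le> a i \<and> 0 \<le> b i \<and> (a i > 0 \<longrightarrow> b i > 0)" "sum a S > 0"
  shows "sum b S > 0"
proof -
  obtain i where i: "i \<in> S" "a i > 0"
  proof (rule ccontr)
    assume "\<not> thesis"
    hence "\<forall>i\<in>S. a i \<le> 0" using that by force
    hence "sum a S \<le> 0" by (intro sum_nonpos) auto
    thus False using assms by simp
  qed
  hence "b i > 0" using assms by auto
  moreover have "b i \<le> sum b S" using assms i by (intro member_le_sum) auto
  ultimately show ?thesis by simp
qed

lemma logsum:
  fixes a b :: "'i \<Rightarrow> real"
  assumes "finite S" "\<forall>i\<in>S. 0 \<le> a i \<and> 0 \<le> b i \<and> (a i > 0 \<longrightarrow> b i > 0)"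
  shows "G (sum a S) (sum b S) \<le> (\<Sum>i\<in>S. G (a i) (b i))"
  using assms
proof (induction S rule: finite_induct)
  case empty thus ?case by simp
next
  case (insert x F)
  have "sum a F > 0 \<longrightarrow> sum b F > 0" using insert by (intro impI sum_pos_ex[of F a b]) auto
  moreover have "0 \<le> sum a F" "0 \<le> sum b F" using insert by (auto intro: sum_nonneg)
  ultimately have "G (a x + sum a F) (b x + sum b F) \<le> G (a x) (b x) + G (sum a F) (sum b F)"
    using insert by (intro logsum2) auto
  also have "\<dots> \<le> G (a x) (b x) + (\<Sum>i\<in>F. G (a i) (b i))" using insert by auto
  finally show ?case using insert by simp
qed

lemma kl_convex_sum:
  fixes w x y :: "'i \<Rightarrow> real"
  assumes "finite S" "sum w S = 1"
    "\<forall>i\<in>S. 0 \<le> w i \<and> 0 \<le> x i \<and> x i \<le> 1 \<and> 0 \<le> y i \<and> y i \<le> 1 \<and> (x i > 0 \<longrightarrow> y i > 0) \<and> (x i < 1 \<longrightarrow> y i < 1)"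
  shows "kl (\<Sum>i\<in>S. w i * x i) (\<Sum>i\<in>S. w i * y i) \<le> (\<Sum>i\<in>S. w i * kl (x i) (y i))"
proof -
  have 1: "G (\<Sum>i\<in>S. w i * x i) (\<Sum>i\<in>S. w i * y i) \<le> (\<Sum>i\<in>S. G (w i * x i) (w i * y i))"
    using assms by (intro logsum) (auto simp: zero_less_mult_iff)
  have 2: "G (\<Sum>i\<in>S. w i * (1 - x i)) (\<Sum>i\<in>S. w i * (1 - y i)) \<le> (\<Sum>i\<in>S. G (w i * (1 - x i)) (w i * (1 - y i)))"
    using assms by (intro logsum) (auto simp: zero_less_mult_iff)
  have e: "(\<Sum>i\<in>S. w i * (1 - z i)) = 1 - (\<Sum>i\<in>S. w i * z i)" for z :: "'i \<Rightarrow> real"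
    using assms(2) by (simp add: algebra_simps sum_subtractf)
  show ?thesis using 1 2 unfolding kl_def e G_scale
    by (simp add: sum.distrib distrib_left)
qed

lemma kl_coin:
  assumes "0 < p" "p < 1" "0 < q" "q < 1"
    "0 \<le> X1" "X1 \<le> 1" "0 \<le> Y1" "Y1 \<le> 1" "X1 > 0 \<longrightarrow> Y1 > 0" "X1 < 1 \<longrightarrow> Y1 < 1"
    "0 \<le> X0" "X0 \<le> 1" "0 \<le> Y0" "Y0 \<le> 1" "X0 > 0 \<longrightarrow> Y0 > 0" "X0 < 1 \<longrightarrow> Y0 < 1"
  shows "kl (p * X1 + (1 - p) * X0) (q * Y1 + (1 - q) * Y0) \<le> kl p q + p * kl X1 Y1 + (1 - p) * kl X0 Y0"
proof -
  have 1: "G (p * X1 + (1 - p) * X0) (q * Y1 + (1 - q) * Y0) \<le> G (p * X1) (q * Y1) + G ((1 - p) * X0) ((1 - q) * Y0)"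
    using assms by (intro logsum2) (auto simp: zero_less_mult_iff)
  have 2: "G (p * (1 - X1) + (1 - p) * (1 - X0)) (q * (1 - Y1) + (1 - q) * (1 - Y0))
     \<le> G (p * (1 - X1)) (q * (1 - Y1)) + G ((1 - p) * (1 - X0)) ((1 - q) * (1 - Y0))"
    using assms by (intro logsum2) (auto simp: zero_less_mult_iff)
  have m1: "G (p * X1) (q * Y1) = X1 * G p q + p * G X1 Y1" using assms by (intro G_mult) auto
  have m2: "G ((1 - p) * X0) ((1 - q) * Y0) = X0 * G (1-p) (1-q) + (1-p) * G X0 Y0" using assms by (intro G_mult) auto
  have m3: "G (p * (1 - X1)) (q * (1 - Y1)) = (1 - X1) * G p q + p * G (1 - X1) (1 - Y1)" using assms by (intro G_mult) auto
  have m4: "G ((1 - p) * (1 - X0)) ((1 - q) * (1 - Y0)) = (1 - X0) * G (1-p) (1-q) + (1-p) * G (1 - X0) (1 - Y0)" using assms by (intro G_mult) auto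
  have e1: "1 - (p * X1 + (1 - p) * X0) = p * (1 - X1) + (1 - p) * (1 - X0)" by (simp add: algebra_simps)
  have e2: "1 - (q * Y1 + (1 - q) * Y0) = q * (1 - Y1) + (1 - q) * (1 - Y0)" by (simp add: algebra_simps)
  show ?thesis using 1 2 unfolding kl_def e1 e2 m1 m2 m3 m4 by (simp add: algebra_simps)
qed

lemma kl_lower:
  assumes "0 \<le> p" "p \<le> 1/4" "1/2 \<le> q" "q < 1"
  shows "11/108 \<le> kl p q"
proof -
  have q0: "q > 0" using assms by simp
  have s1: "G p q = G p (1/4) - p * ln (4 * q)"
  proof (cases "p = 0")
    case False
    hence "p > 0" using assms by simp
    hence h: "ln (p / q) = ln (p / (1/4)) - ln (4*q)" using q0
      using ln_div[of "4*p" "4*q"] by (simp add: field_simps)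
    show ?thesis unfolding G_def h by (simp only: right_diff_distrib)
  qed simp
  have s2: "G (1-p) (1-q) = G (1-p) (3/4) - (1-p) * ln (4 * (1 - q) / 3)"
  proof -
    have r: "((1-p)/(3/4)) / (4*(1-q)/3) = (1-p)/(1-q)" using assms by (simp add: field_simps)
    have h: "ln ((1-p) / (1-q)) = ln ((1-p) / (3/4)) - ln (4*(1-q)/3)" using assms
      using ln_div[of "(1-p)/(3/4)" "4*(1-q)/3"] unfolding r by simp
    show ?thesis unfolding G_def h by (simp only: right_diff_distrib)
  qed
  have t1: "0 \<le> G p (1/4) + G (1-p) (3/4)"
    using G_ge[of p "1/4"] G_ge[of "1-p" "3/4"] assms by simp
  have l1: "ln (4*q) = ln 2 + ln (2*q)" using ln_mult[of 2 "2*q"] q0 by simp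
  have l2: "ln (4*(1-q)/3) = ln (2/3) + ln (2*(1-q))" using ln_mult[of "2/3" "2*(1-q)"] assms by simp
  have l3: "ln (2*q) \<le> 2*q - 1" using q0 by (intro ln_le_minus_one) simp
  have l4: "ln (2*(1-q)) \<le> 1 - 2*q" using assms ln_le_minus_one[of "2*(1-q)"] by simp
  have l5: "ln (2/3) = - ln (3/2::real)" using ln_div[of 2 3] ln_div[of 3 2] by simp
  have t2: "- p * ln (4*q) - (1-p) * ln (4*(1-q)/3) \<ge> - p * ln 2 + (1 - p) * ln (3/2)"
  proof -
    have "p * ln (2*q) \<le> p * (2*q - 1)" using l3 assms by (intro mult_left_mono) auto
    moreover have "(1-p) * ln (2*(1-q)) \<le> (1-p) * (1 - 2*q)" using l4 assms by (intro mult_left_mono) auto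
    moreover have "p * (2*q - 1) + (1-p) * (1 - 2*q) \<le> 0"
    proof -
      have "p * (2*q - 1) + (1-p) * (1 - 2*q) = - ((2*q - 1) * (1 - 2*p))" by (simp add: algebra_simps)
      moreover have "0 \<le> (2*q - 1) * (1 - 2*p)" using assms by (intro mult_nonneg_nonneg) auto
      ultimately show ?thesis by linarith
    qed
    ultimately show ?thesis unfolding l1 l2 l5 by (simp add: algebra_simps)
  qed
  have ln32: "0 < ln (3/2::real)" by simp
  have ln2: "0 < ln (2::real)" by simp
  have t3: "- p * ln 2 + (1 - p) * ln (3/2) \<ge> - (1/4) * ln 2 + (3/4) * ln (3/2::real)"
  proof -
    have "(1/4 - p) * (ln 2 + ln (3/2)) \<ge> 0" using assms ln32 ln2 by (intro mult_nonneg_nonneg) auto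
    thus ?thesis by (simp add: algebra_simps)
  qed
  have l27: "ln (27/16) = 3 * ln (3/2) - ln (2::real)"
  proof -
    have "ln ((3/2::real)^3) = 3 * ln (3/2)" by (simp add: ln_realpow)
    moreover have "ln ((3/2::real)^3 / 2) = ln ((3/2)^3) - ln 2" by (rule ln_divide_pos) auto
    moreover have "(3/2::real)^3 / 2 = 27/16" by (simp add: power3_eq_cube)
    ultimately show ?thesis by simp
  qed
  have "1 - 1/(27/16) \<le> ln (27/16::real)" by (intro ln_ge_one_minus_inv) simp
  hence t4: "11/108 \<le> - (1/4) * ln 2 + (3/4) * ln (3/2::real)" using l27 by simp
  show ?thesis unfolding kl_def s1 s2 using t1 t2 t3 t4 by linarith
qed




lemma int_sum_pmf:
  fixes f :: "'a \<Rightarrow> real"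
  assumes "finite (set_pmf M)"
  shows "(\<integral>x. f x \<partial>measure_pmf M) = (\<Sum>a\<in>set_pmf M. pmf M a * f a)"
  using assms by (subst integral_measure_pmf_real[of "set_pmf M"]) (auto simp: mult.commute)

lemma sum_pmf_1: "finite (set_pmf M) \<Longrightarrow> (\<Sum>a\<in>set_pmf M. pmf M a) = 1"
  by (rule sum_pmf_eq_1) auto

lemma integral_bind_pmf_fin:
  fixes f :: "'b \<Rightarrow> real"
  assumes M: "finite (set_pmf M)" and N: "\<And>x. x \<in> set_pmf M \<Longrightarrow> finite (set_pmf (N x))"
  shows "(\<integral>y. f y \<partial>measure_pmf (M \<bind> N)) = (\<integral>x. (\<integral>y. f y \<partial>measure_pmf (N x)) \<partial>measure_pmf M)"
proof -
  define S where "S = (\<Union>x\<in>set_pmf M. set_pmf (N x))"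
  have S: "finite S" using M N by (auto simp: S_def)
  have "(\<integral>y. f y \<partial>measure_pmf (M \<bind> N)) = (\<Sum>y\<in>S. f y * pmf (M \<bind> N) y)"
    using S by (intro integral_measure_pmf_real) (auto simp: S_def)
  also have "\<dots> = (\<Sum>y\<in>S. f y * (\<Sum>x\<in>set_pmf M. pmf (N x) y * pmf M x))"
    unfolding pmf_bind using M by (subst integral_measure_pmf_real[of "set_pmf M"]) auto
  also have "\<dots> = (\<Sum>x\<in>set_pmf M. (\<Sum>y\<in>S. f y * pmf (N x) y) * pmf M x)"
    unfolding sum_distrib_left sum_distrib_right
    by (subst sum.swap) (simp add: mult_ac)
  also have "\<dots> = (\<integral>x. (\<integral>y. f y \<partial>measure_pmf (N x)) \<partial>measure_pmf M)"
  proof -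
    have "(\<integral>y. f y \<partial>measure_pmf (N x)) = (\<Sum>y\<in>S. f y * pmf (N x) y)" if "x \<in> set_pmf M" for x
      using S that by (intro integral_measure_pmf_real) (auto simp: S_def)
    hence "(\<integral>x. (\<integral>y. f y \<partial>measure_pmf (N x)) \<partial>measure_pmf M)
       = (\<integral>x. (\<Sum>y\<in>S. f y * pmf (N x) y) \<partial>measure_pmf M)"
      by (intro integral_cong_AE) (auto simp: AE_measure_pmf_iff)
    also have "\<dots> = (\<Sum>x\<in>set_pmf M. (\<Sum>y\<in>S. f y * pmf (N x) y) * pmf M x)"
      using M by (intro integral_measure_pmf_real) auto
    finally show ?thesis by simp
  qed
  finally show ?thesis .
qed

lemma int_mono_supp:
  fixes f g :: "'a \<Rightarrow> real"
  assumes "finite (set_pmf M)" "\<And>a. a \<in> set_pmf M \<Longrightarrow> f a \<le> g a"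
  shows "(\<integral>x. f x \<partial>measure_pmf M) \<le> (\<integral>x. g x \<partial>measure_pmf M)"
  using assms unfolding int_sum_pmf[OF assms(1)]
  by (intro sum_mono mult_left_mono) auto

lemma int_const_pmf: "(\<integral>x. c \<partial>measure_pmf M) = (c::real)"
  by simp

lemma int_01:
  fixes f :: "'a \<Rightarrow> real"
  assumes "finite (set_pmf M)" "\<And>a. a \<in> set_pmf M \<Longrightarrow> 0 \<le> f a \<and> f a \<le> 1"
  shows "0 \<le> (\<integral>x. f x \<partial>measure_pmf M) \<and> (\<integral>x. f x \<partial>measure_pmf M) \<le> 1"
  using int_mono_supp[of M "\<lambda>_. 0" f] int_mono_supp[of M f "\<lambda>_. 1"] assms by auto

lemma int_supp_pos:
  fixes x y :: "'a \<Rightarrow> real"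
  assumes "finite (set_pmf M)" "\<And>a. a \<in> set_pmf M \<Longrightarrow> 0 \<le> x a \<and> 0 \<le> y a \<and> (x a > 0 \<longrightarrow> y a > 0)"
    "(\<integral>a. x a \<partial>measure_pmf M) > 0"
  shows "(\<integral>a. y a \<partial>measure_pmf M) > 0"
proof -
  have "(\<Sum>a\<in>set_pmf M. pmf M a * y a) > 0"
  proof (rule sum_pos_ex[of "set_pmf M" "\<lambda>a. pmf M a * x a"])
    show "finite (set_pmf M)" by fact
    show "\<forall>i\<in>set_pmf M. 0 \<le> pmf M i * x i \<and> 0 \<le> pmf M i * y i \<and> (pmf M i * x i > 0 \<longrightarrow> pmf M i * y i > 0)"
    proof
      fix i assume i: "i \<in> set_pmf M"
      hence "pmf M i > 0" by (simp add: pmf_positive)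
      thus "0 \<le> pmf M i * x i \<and> 0 \<le> pmf M i * y i \<and> (pmf M i * x i > 0 \<longrightarrow> pmf M i * y i > 0)"
        using assms(2)[OF i] by (simp add: zero_less_mult_iff)
    qed
    show "(\<Sum>a\<in>set_pmf M. pmf M a * x a) > 0" using assms(3) unfolding int_sum_pmf[OF assms(1)] .
  qed
  thus ?thesis unfolding int_sum_pmf[OF assms(1)] .
qed

lemma int_supp_lt1:
  fixes x y :: "'a \<Rightarrow> real"
  assumes "finite (set_pmf M)" "\<And>a. a \<in> set_pmf M \<Longrightarrow> x a \<le> 1 \<and> y a \<le> 1 \<and> (x a < 1 \<longrightarrow> y a < 1)"
    "(\<integral>a. x a \<partial>measure_pmf M) < 1"
  shows "(\<integral>a. y a \<partial>measure_pmf M) < 1"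
proof -
  have e: "(\<integral>a. (1 - z a) \<partial>measure_pmf M) = 1 - (\<integral>a. z a \<partial>measure_pmf M)" for z :: "'a \<Rightarrow> real"
    using assms(1) unfolding int_sum_pmf[OF assms(1)]
    by (simp add: right_diff_distrib sum_subtractf sum_pmf_1)
  have "(\<integral>a. (1 - y a) \<partial>measure_pmf M) > 0"
  proof (rule int_supp_pos[of M "\<lambda>a. 1 - x a"])
    show "finite (set_pmf M)" by fact
    show "0 \<le> 1 - x a \<and> 0 \<le> 1 - y a \<and> (1 - x a > 0 \<longrightarrow> 1 - y a > 0)" if "a \<in> set_pmf M" for a
      using assms(2)[OF that] by auto
    show "(\<integral>a. (1 - x a) \<partial>measure_pmf M) > 0" unfolding e using assms(3) by simp
  qed
  thus ?thesis by (simp add: e)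
qed

lemma int_kl_convex:
  fixes x y :: "'a \<Rightarrow> real"
  assumes "finite (set_pmf M)"
    "\<And>a. a \<in> set_pmf M \<Longrightarrow> 0 \<le> x a \<and> x a \<le> 1 \<and> 0 \<le> y a \<and> y a \<le> 1 \<and> (x a > 0 \<longrightarrow> y a > 0) \<and> (x a < 1 \<longrightarrow> y a < 1)"
  shows "kl (\<integral>a. x a \<partial>measure_pmf M) (\<integral>a. y a \<partial>measure_pmf M) \<le> (\<integral>a. kl (x a) (y a) \<partial>measure_pmf M)"
  unfolding int_sum_pmf[OF assms(1)]
proof (rule kl_convex_sum)
  show "finite (set_pmf M)" by fact
  show "sum (pmf M) (set_pmf M) = 1" using assms(1) by (rule sum_pmf_1)
  show "\<forall>i\<in>set_pmf M. 0 \<le> pmf M i \<and> 0 \<le> x i \<and> x i \<le> 1 \<and> 0 \<le> y i \<and> y i \<le> 1 \<and> (x i > 0 \<longrightarrow> y i > 0) \<and> (x i < 1 \<longrightarrow> y i < 1)"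
  proof
    fix i assume i: "i \<in> set_pmf M"
    show "0 \<le> pmf M i \<and> 0 \<le> x i \<and> x i \<le> 1 \<and> 0 \<le> y i \<and> y i \<le> 1 \<and> (x i > 0 \<longrightarrow> y i > 0) \<and> (x i < 1 \<longrightarrow> y i < 1)"
      using assms(2)[OF i] by simp
  qed
qed




lemma coin_supp:
  fixes p q X1 X0 Y1 Y0 :: real
  assumes "0 < p" "p < 1" "0 < q" "q < 1"
    "0 \<le> X1" "X1 \<le> 1" "0 \<le> Y1" "Y1 \<le> 1" "X1 > 0 \<longrightarrow> Y1 > 0" "X1 < 1 \<longrightarrow> Y1 < 1"
    "0 \<le> X0" "X0 \<le> 1" "0 \<le> Y0" "Y0 \<le> 1" "X0 > 0 \<longrightarrow> Y0 > 0" "X0 < 1 \<longrightarrow> Y0 < 1"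
  shows "0 \<le> p * X1 + (1 - p) * X0 \<and> p * X1 + (1 - p) * X0 \<le> 1 \<and>
         0 \<le> q * Y1 + (1 - q) * Y0 \<and> q * Y1 + (1 - q) * Y0 \<le> 1 \<and>
         (p * X1 + (1 - p) * X0 > 0 \<longrightarrow> q * Y1 + (1 - q) * Y0 > 0) \<and>
         (p * X1 + (1 - p) * X0 < 1 \<longrightarrow> q * Y1 + (1 - q) * Y0 < 1)"
proof -
  have a1: "p * X1 \<le> p" "(1-p) * X0 \<le> 1 - p" "q * Y1 \<le> q" "(1-q) * Y0 \<le> 1 - q"
    using mult_left_le[of X1 p] mult_left_le[of X0 "1-p"] mult_left_le[of Y1 q] mult_left_le[of Y0 "1-q"]
      assms(1-8,11-14) by auto
  have a2: "0 \<le> p * X1" "0 \<le> (1-p) * X0" "0 \<le> q * Y1" "0 \<le> (1-q) * Y0"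
    using assms(1-8,11-14) by auto
  have pos: "q * Y1 + (1 - q) * Y0 > 0" if "p * X1 + (1 - p) * X0 > 0"
  proof (cases "X1 > 0")
    case True thus ?thesis using assms a2 by (auto intro: add_pos_nonneg)
  next
    case False hence "X1 = 0" using assms by simp
    hence "X0 > 0" using that assms by (cases "X0 = 0") auto
    hence "(1-q) * Y0 > 0" using assms by auto
    thus ?thesis using a2 by linarith
  qed
  have lt: "q * Y1 + (1 - q) * Y0 < 1" if "p * X1 + (1 - p) * X0 < 1"
  proof (cases "X1 < 1")
    case True hence "q * Y1 < q" using assms by auto
    thus ?thesis using a1 by linarith
  next
    case False hence "X1 = 1" using assms by simp
    hence "X0 < 1" using that assms by (cases "X0 = 1") auto
    hence "(1-q) * Y0 < 1 - q" using assms by auto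
    thus ?thesis using a1 by linarith
  qed
  show ?thesis using a1 a2 pos lt by linarith
qed

locale coinctx =
  fixes \<delta> lam \<epsilon> :: real and Q H :: nat and alg :: algorithm
  assumes d0: "0 < \<delta>" and d1: "\<delta> \<le> 1/4" and l0: "0 < lam" and l1: "lam \<le> 1/4"
    and e0: "0 < \<epsilon>" and e1: "\<epsilon> \<le> 1/4" and valid: "valid_alg Q H alg"
begin

abbreviation "pc th r c \<equiv> coin_prob \<delta> lam \<epsilon> th r c"
abbreviation "R th k h \<equiv> run \<delta> lam \<epsilon> th alg k h"

lemma pc_bounds: "0 < pc th r c" "pc th r c < 1"
  using d0 d1 l0 l1 e0 e1 by (auto simp: coin_prob_def)

lemma alg_sub: "set_pmf (alg h) \<subseteq> (\<lambda>(r,c). Flip r c) ` ({1..Q} \<times> {1,2}) \<union> Output ` {1..Q}"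
proof
  fix a assume a: "a \<in> set_pmf (alg h)"
  have v: "case a of Flip r c \<Rightarrow> r \<in> {1..Q} \<and> c \<in> {1, 2} \<and> length h < H | Output t \<Rightarrow> t \<in> {1..Q}"
    using valid a unfolding valid_alg_def by blast
  show "a \<in> (\<lambda>(r,c). Flip r c) ` ({1..Q} \<times> {1,2}) \<union> Output ` {1..Q}"
    using v by (cases a) auto
qed

lemma alg_fin: "finite (set_pmf (alg h))"
  by (rule finite_subset[OF alg_sub]) auto

lemma alg_flip: assumes "Flip r c \<in> set_pmf (alg h)" shows "r \<in> {1..Q}"
proof -
  have "case Flip r c of Flip r c \<Rightarrow> r \<in> {1..Q} \<and> c \<in> {1, 2} \<and> length h < H | Output t \<Rightarrow> t \<in> {1..Q}"
    using valid assms unfolding valid_alg_def by blast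
  thus ?thesis by simp
qed

lemma bern_fin: "finite (set_pmf (bernoulli_pmf p))"
  by (rule finite_subset[of _ UNIV]) auto

lemma run_fin: "finite (set_pmf (R th k h))"
proof (induction k arbitrary: h)
  case 0 thus ?case using alg_fin by simp
next
  case (Suc k)
  have "finite (set_pmf (case a of Output t \<Rightarrow> return_pmf (h, t)
      | Flip r c \<Rightarrow> bernoulli_pmf (pc th r c) \<bind> (\<lambda>b. R th k (h @ [(r, c, b)]))))" for a
  proof (cases a)
    case (Flip r c)
    thus ?thesis using Suc.IH bern_fin by (auto intro!: finite_UN_I)
  qed simp
  thus ?case using alg_fin by (auto intro!: finite_UN_I)
qed

lemma run_set: "set_pmf (R th k h) = set_pmf (R th' k h)"
proof (induction k arbitrary: h)
  case 0 thus ?case by simp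
next
  case (Suc k)
  have "set_pmf (case a of Output t \<Rightarrow> return_pmf (h, t)
      | Flip r c \<Rightarrow> bernoulli_pmf (pc th r c) \<bind> (\<lambda>b. R th k (h @ [(r, c, b)])))
      = set_pmf (case a of Output t \<Rightarrow> return_pmf (h, t)
      | Flip r c \<Rightarrow> bernoulli_pmf (pc th' r c) \<bind> (\<lambda>b. R th' k (h @ [(r, c, b)])))" for a
  proof (cases a)
    case (Flip r c)
    thus ?thesis using Suc.IH pc_bounds by simp
  qed simp
  thus ?case by simp
qed

lemma run_len: "x \<in> set_pmf (R th k h) \<Longrightarrow> length (fst x) \<le> length h + k"
proof (induction k arbitrary: h)
  case 0 thus ?case by (auto split: action.splits)
next
  case (Suc k)
  then obtain a where a: "a \<in> set_pmf (alg h)" and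
    x: "x \<in> set_pmf (case a of Output t \<Rightarrow> return_pmf (h, t)
      | Flip r c \<Rightarrow> bernoulli_pmf (pc th r c) \<bind> (\<lambda>b. R th k (h @ [(r, c, b)])))"
    by auto
  show ?case
  proof (cases a)
    case (Output t) thus ?thesis using x by simp
  next
    case (Flip r c)
    then obtain b where "x \<in> set_pmf (R th k (h @ [(r, c, b)]))" using x by auto
    from Suc.IH[OF this] show ?thesis by simp
  qed
qed

definition stp :: "nat \<Rightarrow> nat \<Rightarrow> history \<Rightarrow> (history \<times> nat \<Rightarrow> real) \<Rightarrow> action \<Rightarrow> real" where
  "stp th k h f a = (case a of Output t \<Rightarrow> f (h, t)
     | Flip r c \<Rightarrow> pc th r c * (\<integral>x. f x \<partial>measure_pmf (R th k (h @ [(r, c, True)])))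
                 + (1 - pc th r c) * (\<integral>x. f x \<partial>measure_pmf (R th k (h @ [(r, c, False)]))))"

lemma E_0: fixes f :: "history \<times> nat \<Rightarrow> real" shows "(\<integral>x. f x \<partial>measure_pmf (R th 0 h)) =
   (\<integral>a. f (case a of Output t \<Rightarrow> (h, t) | Flip r c \<Rightarrow> (h, 0)) \<partial>measure_pmf (alg h))"
  by simp

lemma E_Suc: "(\<integral>x. f x \<partial>measure_pmf (R th (Suc k) h)) = (\<integral>a. stp th k h f a \<partial>measure_pmf (alg h))"
proof -
  let ?N = "\<lambda>a. (case a of Output t \<Rightarrow> return_pmf (h, t)
      | Flip r c \<Rightarrow> bernoulli_pmf (pc th r c) \<bind> (\<lambda>b. R th k (h @ [(r, c, b)])))"
  have fin: "finite (set_pmf (?N a))" for a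
  proof (cases a)
    case (Flip r c)
    thus ?thesis using run_fin bern_fin by (auto intro!: finite_UN_I)
  qed simp
  have "(\<integral>x. f x \<partial>measure_pmf (R th (Suc k) h)) = (\<integral>a. (\<integral>x. f x \<partial>measure_pmf (?N a)) \<partial>measure_pmf (alg h))"
    unfolding run.simps by (rule integral_bind_pmf_fin[OF alg_fin fin])
  also have "\<dots> = (\<integral>a. stp th k h f a \<partial>measure_pmf (alg h))"
  proof (rule Bochner_Integration.integral_cong[OF refl])
    fix a
    show "(\<integral>x. f x \<partial>measure_pmf (?N a)) = stp th k h f a"
    proof (cases a)
      case (Output t) thus ?thesis by (simp add: stp_def)
    next
      case (Flip r c)
      have "(\<integral>x. f x \<partial>measure_pmf (?N a)) =
        (\<integral>b. (\<integral>x. f x \<partial>measure_pmf (R th k (h @ [(r, c, b)]))) \<partial>measure_pmf (bernoulli_pmf (pc th r c)))"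
        unfolding Flip by simp (rule integral_bind_pmf_fin[OF bern_fin run_fin])
      also have "\<dots> = stp th k h f a" using pc_bounds[of th r c]
        by (simp add: stp_def Flip mult.commute)
      finally show ?thesis .
    qed
  qed
  finally show ?thesis .
qed


definition cost :: "nat \<Rightarrow> nat \<times> nat \<times> bool \<Rightarrow> real" where
  "cost j f = (case f of (r, c, b) \<Rightarrow> if r = j then kl (pc 0 r c) (pc j r c) else 0)"

definition cj :: "nat \<Rightarrow> history \<Rightarrow> real" where
  "cj j h = sum_list (map (cost j) h)"

lemma cj_snoc: "cj j (h @ [f]) = cj j h + cost j f"
  by (simp add: cj_def)

definition EE :: "nat \<Rightarrow> nat \<Rightarrow> history \<Rightarrow> (history \<times> nat \<Rightarrow> real) \<Rightarrow> real" where
  "EE th k h f = (\<integral>x. f x \<partial>measure_pmf (R th k h))"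

lemma EE01: assumes "\<And>x. 0 \<le> g x \<and> g x \<le> 1" shows "0 \<le> EE th k h g \<and> EE th k h g \<le> 1"
  unfolding EE_def using assms by (intro int_01 run_fin) auto

lemma kl_cost: assumes "r \<noteq> 0" shows "kl (pc 0 r c) (pc j r c) = cost j (r, c, b)"
proof (cases "r = j")
  case False thus ?thesis using assms by (simp add: cost_def coin_prob_def)
qed (simp add: cost_def)

lemma main_inv:
  fixes g :: "history \<times> nat \<Rightarrow> real"
  assumes g01: "\<And>x. 0 \<le> g x \<and> g x \<le> 1"
  shows "(EE 0 k h g > 0 \<longrightarrow> EE j k h g > 0) \<and> (EE 0 k h g < 1 \<longrightarrow> EE j k h g < 1) \<and>
         kl (EE 0 k h g) (EE j k h g) \<le> EE 0 k h (\<lambda>z. cj j (fst z)) - cj j h"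
proof (induction k arbitrary: h)
  case 0
  have e: "EE th 0 h f = (\<integral>a. f (case a of Output t \<Rightarrow> (h, t) | Flip r c \<Rightarrow> (h, 0)) \<partial>measure_pmf (alg h))" for th f
    unfolding EE_def by (rule E_0)
  have f: "fst (case a of Output t \<Rightarrow> (h, t) | Flip r c \<Rightarrow> (h, 0)) = h" for a by (cases a) auto
  show ?case unfolding e f by simp
next
  case (Suc k)
  define X where "X a = stp 0 k h g a" for a
  define Y where "Y a = stp j k h g a" for a
  define C where "C a = stp 0 k h (\<lambda>z. cj j (fst z)) a" for a
  have ex: "EE 0 (Suc k) h g = (\<integral>a. X a \<partial>measure_pmf (alg h))" unfolding EE_def X_def by (rule E_Suc)
  have ey: "EE j (Suc k) h g = (\<integral>a. Y a \<partial>measure_pmf (alg h))" unfolding EE_def Y_def by (rule E_Suc)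
  have ec: "EE 0 (Suc k) h (\<lambda>z. cj j (fst z)) = (\<integral>a. C a \<partial>measure_pmf (alg h))" unfolding EE_def C_def by (rule E_Suc)
  have P: "0 \<le> X a \<and> X a \<le> 1 \<and> 0 \<le> Y a \<and> Y a \<le> 1 \<and> (X a > 0 \<longrightarrow> Y a > 0) \<and> (X a < 1 \<longrightarrow> Y a < 1)
      \<and> kl (X a) (Y a) \<le> C a - cj j h" if a: "a \<in> set_pmf (alg h)" for a
  proof (cases a)
    case (Output t)
    thus ?thesis using g01[of "(h, t)"] by (simp add: X_def Y_def C_def stp_def)
  next
    case (Flip r c)
    have r0: "r \<noteq> 0" using alg_flip a Flip by fastforce
    define h1 where "h1 = h @ [(r, c, True)]"
    define h0 where "h0 = h @ [(r, c, False)]"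
    define p where "p = pc 0 r c"
    define q where "q = pc j r c"
    define X1 where "X1 = EE 0 k h1 g"
    define X0 where "X0 = EE 0 k h0 g"
    define Y1 where "Y1 = EE j k h1 g"
    define Y0 where "Y0 = EE j k h0 g"
    define C1 where "C1 = EE 0 k h1 (\<lambda>z. cj j (fst z))"
    define C0 where "C0 = EE 0 k h0 (\<lambda>z. cj j (fst z))"
    have Xa: "X a = p * X1 + (1 - p) * X0" unfolding X_def stp_def Flip p_def X1_def X0_def EE_def h1_def h0_def by simp
    have Ya: "Y a = q * Y1 + (1 - q) * Y0" unfolding Y_def stp_def Flip q_def Y1_def Y0_def EE_def h1_def h0_def by simp
    have Ca: "C a = p * C1 + (1 - p) * C0" unfolding C_def stp_def Flip p_def C1_def C0_def EE_def h1_def h0_def by simp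
    have pq: "0 < p" "p < 1" "0 < q" "q < 1" unfolding p_def q_def using pc_bounds by auto
    have r1: "0 \<le> X1 \<and> X1 \<le> 1" "0 \<le> X0 \<and> X0 \<le> 1" "0 \<le> Y1 \<and> Y1 \<le> 1" "0 \<le> Y0 \<and> Y0 \<le> 1"
      unfolding X1_def X0_def Y1_def Y0_def using EE01[OF g01] by auto
    have I1: "(X1 > 0 \<longrightarrow> Y1 > 0) \<and> (X1 < 1 \<longrightarrow> Y1 < 1) \<and> kl X1 Y1 \<le> C1 - cj j h1"
      unfolding X1_def Y1_def C1_def by (rule Suc.IH)
    have I0: "(X0 > 0 \<longrightarrow> Y0 > 0) \<and> (X0 < 1 \<longrightarrow> Y0 < 1) \<and> kl X0 Y0 \<le> C0 - cj j h0"
      unfolding X0_def Y0_def C0_def by (rule Suc.IH)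
    have cs: "0 \<le> p * X1 + (1 - p) * X0 \<and> p * X1 + (1 - p) * X0 \<le> 1 \<and>
         0 \<le> q * Y1 + (1 - q) * Y0 \<and> q * Y1 + (1 - q) * Y0 \<le> 1 \<and>
         (p * X1 + (1 - p) * X0 > 0 \<longrightarrow> q * Y1 + (1 - q) * Y0 > 0) \<and>
         (p * X1 + (1 - p) * X0 < 1 \<longrightarrow> q * Y1 + (1 - q) * Y0 < 1)"
      using pq r1 I1 I0 by (intro coin_supp) auto
    have kc: "kl (p * X1 + (1 - p) * X0) (q * Y1 + (1 - q) * Y0) \<le> kl p q + p * kl X1 Y1 + (1 - p) * kl X0 Y0"
      using pq r1 I1 I0 by (intro kl_coin) auto
    have kpq1: "kl p q = cost j (r, c, True)" unfolding p_def q_def using r0 by (rule kl_cost)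
    have kpq0: "kl p q = cost j (r, c, False)" unfolding p_def q_def using r0 by (rule kl_cost)
    have c1: "cj j h1 = cj j h + kl p q" unfolding h1_def cj_snoc kpq1 ..
    have c0: "cj j h0 = cj j h + kl p q" unfolding h0_def cj_snoc kpq0 ..
    have m1: "p * kl X1 Y1 \<le> p * (C1 - cj j h1)" using I1 pq by (intro mult_left_mono) auto
    have m0: "(1 - p) * kl X0 Y0 \<le> (1 - p) * (C0 - cj j h0)" using I0 pq by (intro mult_left_mono) auto
    have "kl p q + p * (C1 - cj j h1) + (1 - p) * (C0 - cj j h0) = p * C1 + (1 - p) * C0 - cj j h"
      unfolding c1 c0 by (simp add: algebra_simps)
    hence "kl (X a) (Y a) \<le> C a - cj j h" unfolding Xa Ya Ca using kc m1 m0 by linarith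
    thus ?thesis using cs unfolding Xa Ya by simp
  qed
  have pos: "EE 0 (Suc k) h g > 0 \<longrightarrow> EE j (Suc k) h g > 0"
  proof
    assume A: "EE 0 (Suc k) h g > 0"
    show "EE j (Suc k) h g > 0" unfolding ey
    proof (rule int_supp_pos[OF alg_fin, where x = X])
      show "0 \<le> X a \<and> 0 \<le> Y a \<and> (X a > 0 \<longrightarrow> Y a > 0)" if "a \<in> set_pmf (alg h)" for a
        using P[OF that] by blast
      show "(\<integral>a. X a \<partial>measure_pmf (alg h)) > 0" using A unfolding ex .
    qed
  qed
  have lt: "EE 0 (Suc k) h g < 1 \<longrightarrow> EE j (Suc k) h g < 1"
  proof
    assume A: "EE 0 (Suc k) h g < 1"
    show "EE j (Suc k) h g < 1" unfolding ey
    proof (rule int_supp_lt1[OF alg_fin, where x = X])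
      show "X a \<le> 1 \<and> Y a \<le> 1 \<and> (X a < 1 \<longrightarrow> Y a < 1)" if "a \<in> set_pmf (alg h)" for a
        using P[OF that] by blast
      show "(\<integral>a. X a \<partial>measure_pmf (alg h)) < 1" using A unfolding ex .
    qed
  qed
  have "kl (EE 0 (Suc k) h g) (EE j (Suc k) h g) \<le> (\<integral>a. kl (X a) (Y a) \<partial>measure_pmf (alg h))"
    unfolding ex ey by (rule int_kl_convex[OF alg_fin]) (use P in blast)
  also have "\<dots> \<le> (\<integral>a. C a - cj j h \<partial>measure_pmf (alg h))"
    by (rule int_mono_supp[OF alg_fin]) (use P in blast)
  also have "\<dots> = EE 0 (Suc k) h (\<lambda>z. cj j (fst z)) - cj j h"
    unfolding ec by (simp add: integrable_measure_pmf_finite[OF alg_fin])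
  finally show ?case using pos lt by blast
qed

end



context coinctx begin

definition kb :: "nat \<Rightarrow> real" where
  "kb c = kl (if c = 1 then 1/2 else \<delta>) (if c = 1 then 1/2 + lam else \<delta> + \<epsilon>)"

lemma kb_nonneg: "0 \<le> kb c"
  unfolding kb_def using d0 d1 l0 l1 e0 e1 by (intro kl_nonneg) auto

lemma cost_eq: assumes "j \<ge> 1" shows "cost j (r, c, b) = (if r = j then kb c else 0)"
  using assms by (auto simp: cost_def kb_def coin_prob_def)

lemma cost_nonneg: "0 \<le> cost j f"
proof -
  obtain r c b where f: "f = (r, c, b)" by (cases f) auto
  have "0 \<le> kl (pc 0 r c) (pc j r c)"
    using pc_bounds[of 0 r c] pc_bounds[of j r c] by (intro kl_nonneg) auto
  thus ?thesis unfolding cost_def f by auto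
qed

lemma cj_nonneg: "0 \<le> cj j h"
  unfolding cj_def using cost_nonneg by (intro sum_list_nonneg) auto

lemma cost_sum: "(\<Sum>j\<in>{1..Q}. cost j (r, c, b)) \<le> (if c = 1 then kb 1 else 0) + kb 2"
proof -
  have "(\<Sum>j\<in>{1..Q}. cost j (r, c, b)) = (\<Sum>j\<in>{1..Q}. (if r = j then kb c else 0))"
    by (intro sum.cong refl) (simp add: cost_eq)
  also have "\<dots> = (if r \<in> {1..Q} then kb c else 0)" by (simp add: sum.delta')
  also have "\<dots> \<le> (if c = 1 then kb 1 else 0) + kb 2"
    using kb_nonneg[of c] kb_nonneg[of 1] kb_nonneg[of 2] by (auto simp: kb_def)
  finally show ?thesis .
qed

lemma cj_sum: "(\<Sum>j\<in>{1..Q}. cj j h) \<le> kb 1 * real (N1 h) + kb 2 * real (length h)"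
proof (induction h)
  case Nil thus ?case by (simp add: cj_def N1_def)
next
  case (Cons f h)
  obtain r c b where f: "f = (r, c, b)" by (cases f) auto
  have e1: "(\<Sum>j\<in>{1..Q}. cj j (f # h)) = (\<Sum>j\<in>{1..Q}. cost j f) + (\<Sum>j\<in>{1..Q}. cj j h)"
    by (simp add: cj_def sum.distrib)
  have e2: "real (N1 (f # h)) = (if c = 1 then 1 else 0) + real (N1 h)"
    by (simp add: N1_def f)
  show ?case unfolding e1 e2 using Cons.IH cost_sum[of r c b] unfolding f
    by (simp add: algebra_simps split: if_splits)
qed

lemma kb1: "kb 1 \<le> 16 * lam^2 / 3"
proof -
  have "kb 1 \<le> (1/2 - (1/2 + lam))^2 / ((1/2 + lam) * (1 - (1/2 + lam)))"
    using kl_upper[of "1/2" "1/2 + lam"] l0 l1 by (simp add: kb_def)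
  also have "\<dots> = lam^2 / (1/4 - lam^2)" by (simp add: power2_eq_square algebra_simps)
  also have "\<dots> \<le> lam^2 / (3/16)"
  proof (rule divide_left_mono)
    have "lam^2 \<le> (1/4)^2" using l0 l1 by (intro power_mono) auto
    thus "3/16 \<le> 1/4 - lam^2" by (simp add: power2_eq_square)
  next
    have "lam^2 \<le> (1/4)^2" using l0 l1 by (intro power_mono) auto
    thus "0 < (1/4 - lam^2) * (3/16)" by (simp add: power2_eq_square)
  qed (use l0 in auto)
  finally show ?thesis by simp
qed

lemma kb2: "kb 2 \<le> 2 * \<epsilon>^2 / \<delta>"
proof -
  have "kb 2 \<le> (\<delta> - (\<delta> + \<epsilon>))^2 / ((\<delta> + \<epsilon>) * (1 - (\<delta> + \<epsilon>)))"
    using kl_upper[of "\<delta>" "\<delta> + \<epsilon>"] d0 d1 e0 e1 by (simp add: kb_def)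
  also have "\<dots> = \<epsilon>^2 / ((\<delta> + \<epsilon>) * (1 - (\<delta> + \<epsilon>)))" by (simp add: power2_eq_square)
  also have "\<dots> \<le> \<epsilon>^2 / (\<delta> / 2)"
  proof (rule divide_left_mono)
    have "\<delta> * (1/2) \<le> (\<delta> + \<epsilon>) * (1 - (\<delta> + \<epsilon>))"
      using d0 d1 e0 e1 by (intro mult_mono) auto
    thus "\<delta> / 2 \<le> (\<delta> + \<epsilon>) * (1 - (\<delta> + \<epsilon>))" by simp
    show "0 < (\<delta> + \<epsilon>) * (1 - (\<delta> + \<epsilon>)) * (\<delta> / 2)" using d0 d1 e0 e1 by simp
  qed simp
  finally show ?thesis by (simp add: mult.commute)
qed

end



context coinctx begin

lemma final:
  assumes hQ: "Q \<ge> 12" and hH: "H > 0" and eps: "\<epsilon> = 1/20 * sqrt (real Q * \<delta> / real H)"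
    and N1b: "\<forall>j\<in>{1..Q}. \<forall>x\<in>set_pmf (outcome \<delta> lam \<epsilon> H alg j). real (N1 (fst x)) \<le> real Q / (4 * 40 * lam^2)"
  shows "\<exists>J \<subseteq> {1..Q}. real (card J) \<ge> real Q / 6 \<and>
           (\<forall>j\<in>J. measure_pmf.prob (outcome \<delta> lam \<epsilon> H alg j) {x. snd x = j} \<le> 1/2)"
proof -
  define S where "S = {1..Q}"
  define g where "g j = (indicator {z::history \<times> nat. snd z = j} :: history \<times> nat \<Rightarrow> real)" for j
  define x where "x j = EE 0 H [] (g j)" for j
  define y where "y j = EE j H [] (g j)" for j
  define e where "e j = EE 0 H [] (\<lambda>z. cj j (fst z))" for j
  have fin0: "finite (set_pmf (R 0 H []))" by (rule run_fin)
  have int0: "integrable (measure_pmf (R 0 H [])) f" for f :: "history \<times> nat \<Rightarrow> real"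
    by (rule integrable_measure_pmf_finite[OF fin0])
  have yprob: "y j = measure_pmf.prob (outcome \<delta> lam \<epsilon> H alg j) {x. snd x = j}" for j
    unfolding y_def EE_def g_def outcome_def by simp
  have g01: "0 \<le> g j z \<and> g j z \<le> 1" for j z by (simp add: g_def indicator_def)
  have x01: "0 \<le> x j \<and> x j \<le> 1" for j unfolding x_def using g01 by (intro EE01) auto
  have y01: "0 \<le> y j \<and> y j \<le> 1" for j unfolding y_def using g01 by (intro EE01) auto
  have inv: "(x j > 0 \<longrightarrow> y j > 0) \<and> (x j < 1 \<longrightarrow> y j < 1) \<and> kl (x j) (y j) \<le> e j" for j
    using main_inv[where g="g j" and k=H and h="[]" and j=j] g01 unfolding x_def y_def e_def by (simp add: cj_def)
  have e0: "0 \<le> e j" for j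
    unfolding e_def EE_def using int_mono_supp[OF fin0, of "\<lambda>_. 0" "\<lambda>z. cj j (fst z)"] cj_nonneg by simp
  have sumx: "(\<Sum>j\<in>S. x j) \<le> 1"
  proof -
    have "(\<Sum>j\<in>S. x j) = EE 0 H [] (\<lambda>z. \<Sum>j\<in>S. g j z)"
      unfolding x_def EE_def by (simp add: int0)
    also have "\<dots> \<le> EE 0 H [] (\<lambda>z. 1)"
      unfolding EE_def
    proof (rule int_mono_supp[OF fin0])
      fix z
      have "(\<Sum>j\<in>S. g j z) = (\<Sum>j\<in>S. if snd z = j then 1 else 0)"
        by (intro sum.cong refl) (simp add: g_def indicator_def)
      also have "\<dots> = (if snd z \<in> S then 1 else 0)" by (simp add: sum.delta' S_def)
      finally show "(\<Sum>j\<in>S. g j z) \<le> 1" by simp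
    qed
    also have "\<dots> = 1" by (simp add: EE_def)
    finally show ?thesis .
  qed
  have eps2: "\<epsilon>^2 = real Q * \<delta> / (400 * real H)"
  proof -
    have "\<epsilon>^2 = (1/20)^2 * (sqrt (real Q * \<delta> / real H))^2" unfolding eps by (rule power_mult_distrib)
    also have "\<dots> = (1/400) * (real Q * \<delta> / real H)" using d0 by (subst real_sqrt_pow2) (auto simp: power2_eq_square)
    finally show ?thesis by simp
  qed
  have sume: "(\<Sum>j\<in>S. e j) \<le> 23 * real Q / 600"
  proof -
    define B1 where "B1 = real Q / (4 * 40 * lam^2)"
    have B1: "0 \<le> B1" unfolding B1_def by simp
    have "(\<Sum>j\<in>S. e j) = EE 0 H [] (\<lambda>z. \<Sum>j\<in>S. cj j (fst z))"
      unfolding e_def EE_def by (simp add: int0)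
    also have "\<dots> \<le> EE 0 H [] (\<lambda>z. kb 1 * B1 + kb 2 * real H)"
      unfolding EE_def
    proof (rule int_mono_supp[OF fin0])
      fix z assume z: "z \<in> set_pmf (R 0 H [])"
      have z1: "z \<in> set_pmf (outcome \<delta> lam \<epsilon> H alg 1)" using z run_set[of 0 H "[]" 1]
        unfolding outcome_def by simp
      have n1: "real (N1 (fst z)) \<le> B1" using N1b z1 hQ unfolding B1_def by auto
      have ln: "real (length (fst z)) \<le> real H" using run_len[OF z] by simp
      have "(\<Sum>j\<in>S. cj j (fst z)) \<le> kb 1 * real (N1 (fst z)) + kb 2 * real (length (fst z))"
        unfolding S_def by (rule cj_sum)
      also have "\<dots> \<le> kb 1 * B1 + kb 2 * real H"
        using n1 ln kb_nonneg[of 1] kb_nonneg[of 2] by (intro add_mono mult_left_mono) auto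
      finally show "(\<Sum>j\<in>S. cj j (fst z)) \<le> kb 1 * B1 + kb 2 * real H" .
    qed
    also have "\<dots> = kb 1 * B1 + kb 2 * real H" by (simp add: EE_def)
    also have "\<dots> \<le> (16 * lam^2 / 3) * B1 + (2 * \<epsilon>^2 / \<delta>) * real H"
      using kb1 kb2 B1 by (intro add_mono mult_right_mono) auto
    also have "\<dots> = 23 * real Q / 600"
      unfolding B1_def eps2 using l0 d0 hH by (simp add: field_simps)
    finally show ?thesis .
  qed
  define Bd where "Bd = {j\<in>S. y j > 1/2}"
  define Ba where "Ba = {j\<in>Bd. x j \<ge> 1/4}"
  define Bb where "Bb = {j\<in>Bd. x j < 1/4}"
  define J where "J = S - Bd"
  have finS: "finite S" by (simp add: S_def)
  have cardS: "card S = Q" by (simp add: S_def)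
  have BdS: "Bd \<subseteq> S" by (auto simp: Bd_def)
  have cBd: "card Bd = card Ba + card Bb"
  proof -
    have "Bd = Ba \<union> Bb" "Ba \<inter> Bb = {}" by (auto simp: Ba_def Bb_def)
    moreover have "finite Ba" "finite Bb" using finS by (auto simp: Ba_def Bb_def Bd_def)
    ultimately show ?thesis by (simp add: card_Un_disjoint)
  qed
  have cJ: "real (card J) = real Q - real (card Bd)"
    unfolding J_def using card_Diff_subset[OF finite_subset[OF BdS finS] BdS] card_mono[OF finS BdS] cardS
    by simp
  have cBa: "real (card Ba) \<le> 4"
  proof -
    have BaS: "Ba \<subseteq> S" by (auto simp: Ba_def Bd_def)
    have "real (card Ba) * (1/4) = (\<Sum>j\<in>Ba. 1/4)" by simp
    also have "\<dots> \<le> (\<Sum>j\<in>Ba. x j)" by (intro sum_mono) (auto simp: Ba_def)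
    also have "\<dots> \<le> (\<Sum>j\<in>S. x j)" using BaS finS x01 by (intro sum_mono2) auto
    finally show ?thesis using sumx by simp
  qed
  have cBb: "real (card Bb) * (11/108) \<le> 23 * real Q / 600"
  proof -
    have BbS: "Bb \<subseteq> S" by (auto simp: Bb_def Bd_def)
    have "real (card Bb) * (11/108) = (\<Sum>j\<in>Bb. 11/108)" by simp
    also have "\<dots> \<le> (\<Sum>j\<in>Bb. e j)"
    proof (rule sum_mono)
      fix j assume j: "j \<in> Bb"
      hence xj: "x j < 1/4" and yj: "y j > 1/2" by (auto simp: Bb_def Bd_def)
      have "y j < 1" using inv[of j] xj by auto
      hence "11/108 \<le> kl (x j) (y j)" using xj yj x01[of j] by (intro kl_lower) auto
      thus "11/108 \<le> e j" using inv[of j] by linarith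
    qed
    also have "\<dots> \<le> (\<Sum>j\<in>S. e j)" using BbS finS e0 by (intro sum_mono2) auto
    finally show ?thesis using sume by linarith
  qed
  show ?thesis
  proof (intro exI[of _ J] conjI ballI)
    show "J \<subseteq> {1..Q}" by (auto simp: J_def S_def)
    show "real Q / 6 \<le> real (card J)" using cJ cBd cBa cBb hQ by simp
    fix j assume "j \<in> J"
    hence "y j \<le> 1/2" by (auto simp: J_def Bd_def S_def)
    thus "measure_pmf.prob (outcome \<delta> lam \<epsilon> H alg j) {x. snd x = j} \<le> 1/2" by (simp add: yprob)
  qed
qed

end


theorem corollary3:
  fixes Q H :: nat and \<delta> lam \<epsilon> :: real and alg :: algorithm
  assumes hQ: "Q \<ge> 12" and hH: "H > 0"
    and h\<delta>: "0 < \<delta>" "\<delta> \<le> 1/4"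
    and hlam: "0 < lam" "lam \<le> 1/4"
    and h\<epsilon>: "0 < \<epsilon>" "\<epsilon> \<le> 1/4"
    and \<epsilon>_def: "\<epsilon> = 1/20 * sqrt (real Q * \<delta> / real H)"
    and alg: "valid_alg Q H alg"
    and N1_bound: "\<forall>j\<in>{1..Q}. \<forall>x\<in>set_pmf (outcome \<delta> lam \<epsilon> H alg j).
                     real (N1 (fst x)) \<le> real Q / (4 * 40 * lam^2)"
  shows "\<exists>J \<subseteq> {1..Q}. real (card J) \<ge> real Q / 6 \<and>
           (\<forall>j\<in>J. measure_pmf.prob (outcome \<delta> lam \<epsilon> H alg j) {x. snd x = j} \<le> 1/2)"
  proof -
  interpret coinctx \<delta> lam \<epsilon> Q H alg
    using h\<delta> hlam h\<epsilon> alg by unfold_locales auto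
  show ?thesis using final[OF hQ hH \<epsilon>_def N1_bound] .
qed

end
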